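(* Let $A\in\mathbb R^{n\times n}$ be Hurwitz, $B\in\mathbb R^n$, $0<P,Q\in\mathrm S^n$ with $Q=-(A^\top P+PA)$, $\mathscr b>0$ and fix $\gamma\in(0,1)$. Define, for $\alpha>0$, the convergence rate $c_{\mathrm e}(\alpha)=g(\alpha\mathscr b\gamma,Q,PB)/\lambda_{\max}(P)$. Then there exists a nonempty interval $\mathcal J=(0,\sup\mathcal J)$ on which $\alpha\mapsto c_{\mathrm e}(\alpha)$ is strictly increasing if and only if $g(1,Q,PB)>\lambda_{\min}(Q)$. Moreover, if $n\ge2$, then $c_{\mathrm e}(\alpha)\le\lambda_{\max}(Q)/\lambda_{\max}(P)$ for all $\alpha>0$; and if $g(1,Q,PB)>\lambda_{\min}(Q)$ fails, then $c_{\mathrm e}(\alpha)=\lambda_{\min}(Q)/\lambda_{\max}(P)$ for all $\alpha>0$.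
   Context: $\mathrm S^n$: real symmetric $n\times n$ matrices; $g(\phi,Q,v)=\lambda_{\min}(Q+\phi\,vv^\top)$. In the paper, $\mathscr b=\inf_x\beta(x)^\top K_{\mathrm b}\beta(x)$ and $\alpha$ scales the gain $K=\alpha K_{\mathrm b}$ of the static update law $\hat W=K\beta(e)B^\top Pe$, and $c_{\mathrm e}$ is the exponential rate in the transient bound on $\|e(t)\|$. *)

theory Defs
  imports "HOL-Analysis.Analysis"
begin

definition real_eigenvalues :: "real^'n^'n \<Rightarrow> real set" where
  "real_eigenvalues M = {l. \<exists>v. v \<noteq> 0 \<and> M *v v = l *\<^sub>R v}"

text \<open>Smallest / largest eigenvalue (used for symmetric matrices, whose eigenvalues are all real).\<close>
definition lambda_min :: "real^'n^'n \<Rightarrow> real" where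
  "lambda_min M = Inf (real_eigenvalues M)"

definition lambda_max :: "real^'n^'n \<Rightarrow> real" where
  "lambda_max M = Sup (real_eigenvalues M)"

definition symmetric_matrix :: "real^'n^'n \<Rightarrow> bool" where
  "symmetric_matrix M \<longleftrightarrow> transpose M = M"

definition pos_def :: "real^'n^'n \<Rightarrow> bool" where
  "pos_def M \<longleftrightarrow> symmetric_matrix M \<and> (\<forall>x. x \<noteq> 0 \<longrightarrow> x \<bullet> (M *v x) > 0)"

definition hurwitz :: "real^'n^'n \<Rightarrow> bool" where
  "hurwitz A \<longleftrightarrow> (\<forall>l::complex. (\<exists>v::complex^'n. v \<noteq> 0 \<and>
        (\<chi> i j. complex_of_real (A $ i $ j)) *v v = l *s v) \<longrightarrow> Re l < 0)"

definition outer :: "real^'n \<Rightarrow> real^'n^'n" where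
  "outer v = (\<chi> i j. v $ i * v $ j)"

definition g :: "real \<Rightarrow> real^'n^'n \<Rightarrow> real^'n \<Rightarrow> real" where
  "g phi Q v = lambda_min (Q + phi *\<^sub>R outer v)"

end

theory Submission
  imports Defs
begin

lemma sym_inner:
  assumes "symmetric_matrix M"
  shows "x \<bullet> (M *v y) = y \<bullet> (M *v x)"
proof -
  have "x \<bullet> (M *v y) = (x v* M) \<bullet> y" by (simp add: dot_lmul_matrix)
  also have "x v* M = M *v x" using assms unfolding symmetric_matrix_def
    by (metis vector_transpose_matrix)
  finally show ?thesis by (simp add: inner_commute)
qed

lemma quad_scale: "(c *\<^sub>R x) \<bullet> (M *v (c *\<^sub>R x)) = c^2 * (x \<bullet> (M *v (x::real^'n)))"
  by (simp add: matrix_vector_mult_scaleR power2_eq_square)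

lemma psd_null:
  fixes N :: "real^'n^'n"
  assumes sym: "symmetric_matrix N" and psd: "\<And>y. 0 \<le> y \<bullet> (N *v y)" and z: "x \<bullet> (N *v x) = 0"
  shows "N *v x = 0"
proof -
  define y where "y = N *v x"
  define c where "c = y \<bullet> (N *v x)"
  define d where "d = y \<bullet> (N *v y)"
  have d0: "d \<ge> 0" using psd d_def by simp
  have key: "0 \<le> 2*t*c + t^2*d" for t
  proof -
    have "0 \<le> (x + t *\<^sub>R y) \<bullet> (N *v (x + t *\<^sub>R y))" by (rule psd)
    also have "\<dots> = x \<bullet> (N *v x) + t * (x \<bullet> (N *v y)) + t * (y \<bullet> (N *v x)) + t^2 * d"
      by (simp add: matrix_vector_right_distrib matrix_vector_mult_scaleR inner_add_left inner_add_right d_def power2_eq_square algebra_simps)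
    also have "\<dots> = 2*t*c + t^2*d" using z sym_inner[OF sym, of x y] c_def by simp
    finally show ?thesis .
  qed
  have "c = 0"
  proof (rule ccontr)
    assume "c \<noteq> 0"
    define t where "t = - c / (d+1)"
    have "0 \<le> 2*t*c + t^2*d" by (rule key)
    also have "2*t*c + t^2*d = c^2/(d+1) * (-2 + d/(d+1))"
      using d0 unfolding t_def by (simp add: divide_simps power2_eq_square) (simp add: algebra_simps)
    also have "\<dots> < 0"
    proof (rule mult_pos_neg)
      show "0 < c^2/(d+1)" using \<open>c \<noteq> 0\<close> d0 by simp
      have "d/(d+1) < 1" using d0 by simp
      then show "-2 + d/(d+1) < 0" by simp
    qed
    finally show False by simp
  qed
  then show ?thesis unfolding c_def y_def by simp
qed

lemma core_min:
  fixes M :: "real^'n^'n"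
  assumes sym: "symmetric_matrix M"
  shows "\<exists>x0 m. norm x0 = 1 \<and> M *v x0 = m *\<^sub>R x0 \<and> (\<forall>x. m * (x \<bullet> x) \<le> x \<bullet> (M *v x))"
proof -
  let ?f = "\<lambda>x::real^'n. x \<bullet> (M *v x)"
  have "sphere (0::real^'n) 1 \<noteq> {}" by (simp add: sphere_def) (metis norm_axis_1)
  moreover have "continuous_on (sphere 0 1) ?f"
    by (intro continuous_intros)
  ultimately obtain x0 where x0: "x0 \<in> sphere 0 1" and mn: "\<And>y. y \<in> sphere 0 1 \<Longrightarrow> ?f x0 \<le> ?f y"
    using continuous_attains_inf[of "sphere 0 1" ?f] by auto
  define m where "m = ?f x0"
  have nx0: "norm x0 = 1" using x0 by simp
  have lb: "m * (x \<bullet> x) \<le> ?f x" for x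
  proof (cases "x = 0")
    case True then show ?thesis by simp
  next
    case False
    define u where "u = (1/norm x) *\<^sub>R x"
    have "u \<in> sphere 0 1" using False by (simp add: u_def)
    then have "m \<le> ?f u" using mn m_def by simp
    also have "?f u = (1/norm x)^2 * ?f x" unfolding u_def by (rule quad_scale)
    finally have "m \<le> (1/norm x)^2 * ?f x" .
    then have "m * (norm x)^2 \<le> ?f x" using False by (simp add: field_simps)
    then show ?thesis by (simp add: power2_norm_eq_inner)
  qed
  define N where "N = M - m *\<^sub>R mat 1"
  have Nx: "N *v x = M *v x - m *\<^sub>R x" for x
    by (simp add: N_def matrix_vector_mult_diff_rdistrib scaleR_matrix_vector_assoc[symmetric])
  have symN: "symmetric_matrix N" using sym unfolding symmetric_matrix_def N_def
    by (simp add: vec_eq_iff transpose_def mat_def)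
  have "N *v x0 = 0"
  proof (rule psd_null[OF symN])
    fix y show "0 \<le> y \<bullet> (N *v y)" using lb[of y] by (simp add: Nx inner_diff_right)
    show "x0 \<bullet> (N *v x0) = 0" using nx0 by (simp add: Nx inner_diff_right m_def power2_norm_eq_inner[symmetric])
  qed
  then have "M *v x0 = m *\<^sub>R x0" by (simp add: Nx)
  then show ?thesis using nx0 lb by blast
qed

lemma lmin_props:
  fixes M :: "real^'n^'n"
  assumes sym: "symmetric_matrix M"
  shows "(\<forall>x. lambda_min M * (x \<bullet> x) \<le> x \<bullet> (M *v x)) \<and> (\<exists>x. norm x = 1 \<and> x \<bullet> (M *v x) = lambda_min M)"
proof -
  obtain x0 m where nx0: "norm x0 = 1" and ev: "M *v x0 = m *\<^sub>R x0" and lb: "\<forall>x. m * (x \<bullet> x) \<le> x \<bullet> (M *v x)"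
    using core_min[OF sym] by blast
  have x0nz: "x0 \<noteq> 0" using nx0 by auto
  have "lambda_min M = m" unfolding lambda_min_def
  proof (rule cInf_eq_minimum)
    show "m \<in> real_eigenvalues M" unfolding real_eigenvalues_def using x0nz ev by blast
    fix l assume "l \<in> real_eigenvalues M"
    then obtain v where v: "v \<noteq> 0" "M *v v = l *\<^sub>R v" unfolding real_eigenvalues_def by blast
    have "m * (v \<bullet> v) \<le> l * (v \<bullet> v)" using lb v(2) by (metis inner_scaleR_right)
    moreover have "v \<bullet> v > 0" using v(1) by simp
    ultimately show "m \<le> l" by simp
  qed
  moreover have "x0 \<bullet> (M *v x0) = m" using ev nx0 by (simp add: power2_norm_eq_inner[symmetric])
  ultimately show ?thesis using lb nx0 by auto
qed

lemma lmax_props: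
  fixes M :: "real^'n^'n"
  assumes sym: "symmetric_matrix M"
  shows "(\<forall>x. x \<bullet> (M *v x) \<le> lambda_max M * (x \<bullet> x)) \<and> (\<exists>x. norm x = 1 \<and> x \<bullet> (M *v x) = lambda_max M)"
proof -
  have symN: "symmetric_matrix (-M)" using sym unfolding symmetric_matrix_def
    by (simp add: vec_eq_iff transpose_def)
  have neg: "(-M) *v x = - (M *v x)" for x
    by (simp add: vec_eq_iff matrix_vector_mult_def sum_negf)
  obtain x0 m where nx0: "norm x0 = 1" and ev: "(-M) *v x0 = m *\<^sub>R x0" and lb: "\<forall>x. m * (x \<bullet> x) \<le> x \<bullet> ((-M) *v x)"
    using core_min[OF symN] by blast
  have ev': "M *v x0 = (-m) *\<^sub>R x0" using ev neg[of x0] by (metis minus_minus scaleR_minus_left)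
  have ub: "x \<bullet> (M *v x) \<le> (-m) * (x \<bullet> x)" for x using lb[rule_format, of x] neg[of x] by simp
  have x0nz: "x0 \<noteq> 0" using nx0 by auto
  have "lambda_max M = -m" unfolding lambda_max_def
  proof (rule cSup_eq_maximum)
    show "-m \<in> real_eigenvalues M" unfolding real_eigenvalues_def using x0nz ev' by blast
    fix l assume "l \<in> real_eigenvalues M"
    then obtain v where v: "v \<noteq> 0" "M *v v = l *\<^sub>R v" unfolding real_eigenvalues_def by blast
    have "l * (v \<bullet> v) \<le> (-m) * (v \<bullet> v)" using ub[of v] v(2) by (metis inner_scaleR_right)
    moreover have "v \<bullet> v > 0" using v(1) by simp
    ultimately show "l \<le> -m" by (metis mult_le_cancel_right_pos mult_minus_left)
  qed
  moreover have "x0 \<bullet> (M *v x0) = -m" using ev' nx0 by (simp add: power2_norm_eq_inner[symmetric])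
  ultimately show ?thesis using ub nx0 by auto
qed

lemma outer_mult: "outer v *v x = (v \<bullet> x) *\<^sub>R v"
  by (simp add: vec_eq_iff outer_def matrix_vector_mult_def inner_vec_def sum_distrib_left mult.commute mult.left_commute)

lemma sym_pert: "symmetric_matrix Q \<Longrightarrow> symmetric_matrix (Q + phi *\<^sub>R outer v)"
  unfolding symmetric_matrix_def by (simp add: vec_eq_iff transpose_def outer_def mult.commute)

lemma quad_pert: "x \<bullet> ((Q + phi *\<^sub>R outer v) *v x) = x \<bullet> (Q *v x) + phi * (x \<bullet> v)^2"
  by (simp add: matrix_vector_mult_add_rdistrib scaleR_matrix_vector_assoc[symmetric] outer_mult
      inner_add_right power2_eq_square inner_commute)

lemma g_lb:
  assumes "symmetric_matrix Q"
  shows "g phi Q v * (x \<bullet> x) \<le> x \<bullet> (Q *v x) + phi * (x \<bullet> v)^2"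
  using lmin_props[OF sym_pert[OF assms, of phi v]] quad_pert[of x Q phi v] unfolding g_def by metis

lemma g_att:
  assumes "symmetric_matrix Q"
  shows "\<exists>x. norm x = 1 \<and> g phi Q v = x \<bullet> (Q *v x) + phi * (x \<bullet> v)^2"
  using lmin_props[OF sym_pert[OF assms, of phi v]] quad_pert[of _ Q phi v] unfolding g_def by metis

lemma g_mono:
  assumes "symmetric_matrix Q" "a \<le> b"
  shows "g a Q v \<le> g b Q v"
proof -
  obtain x where x: "norm x = 1" "g b Q v = x \<bullet> (Q *v x) + b * (x \<bullet> v)^2" using g_att[OF assms(1)] by blast
  have "g a Q v * (x \<bullet> x) \<le> x \<bullet> (Q *v x) + a * (x \<bullet> v)^2" by (rule g_lb[OF assms(1)])
  moreover have "x \<bullet> x = 1" using x(1) by (simp add: power2_norm_eq_inner[symmetric])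
  moreover have "a * (x \<bullet> v)^2 \<le> b * (x \<bullet> v)^2" using assms(2) by (simp add: mult_right_mono)
  ultimately show ?thesis using x(2) by simp
qed

lemma g_flat:
  assumes "symmetric_matrix Q" "a < b" "g a Q v = g b Q v" "b \<le> c"
  shows "g c Q v = g b Q v"
proof -
  obtain x where x: "norm x = 1" "g b Q v = x \<bullet> (Q *v x) + b * (x \<bullet> v)^2" using g_att[OF assms(1)] by blast
  have xx: "x \<bullet> x = 1" using x(1) by (simp add: power2_norm_eq_inner[symmetric])
  have "g a Q v \<le> x \<bullet> (Q *v x) + a * (x \<bullet> v)^2" using g_lb[OF assms(1), of a v x] xx by simp
  then have "(b - a) * (x \<bullet> v)^2 \<le> 0" using x(2) assms(3) by (simp add: algebra_simps)
  then have w0: "(x \<bullet> v)^2 = 0" using assms(2)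
    by (metis diff_gt_0_iff_gt le_less_trans linorder_not_le mult_pos_pos zero_less_power2 power_zero_numeral)
  have "g c Q v \<le> x \<bullet> (Q *v x) + c * (x \<bullet> v)^2" using g_lb[OF assms(1), of c v x] xx by simp
  then have "g c Q v \<le> g b Q v" using x(2) w0 by simp
  moreover have "g b Q v \<le> g c Q v" by (rule g_mono[OF assms(1,4)])
  ultimately show ?thesis by simp
qed

lemma g_cont0:
  assumes "symmetric_matrix Q"
  shows "\<exists>w\<ge>0. \<forall>a. g a Q v \<le> g 0 Q v + a * w"
proof -
  obtain x where x: "norm x = 1" "g 0 Q v = x \<bullet> (Q *v x) + 0 * (x \<bullet> v)^2" using g_att[OF assms(1)] by blast
  have xx: "x \<bullet> x = 1" using x(1) by (simp add: power2_norm_eq_inner[symmetric])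
  have "g a Q v \<le> g 0 Q v + a * (x \<bullet> v)^2" for a using g_lb[OF assms(1), of a v x] xx x(2) by simp
  then show ?thesis by (intro exI[of _ "(x \<bullet> v)^2"]) auto
qed

lemma g_zero: "g 0 Q v = lambda_min Q"
  by (simp add: g_def)

lemma exists_orth:
  fixes v :: "real^'n"
  assumes "CARD('n) \<ge> 2"
  shows "\<exists>x. norm x = 1 \<and> x \<bullet> v = 0"
proof -
  obtain i j :: 'n where ij: "i \<noteq> j"
  proof -
    have "\<not> (\<forall>i j::'n. i = j)"
    proof
      assume "\<forall>i j::'n. i = j"
      then have "(UNIV::'n set) \<subseteq> {undefined}" by blast
      then have "CARD('n) \<le> 1" by (metis card.empty card.insert card_mono empty_iff finite.emptyI finite_insert One_nat_def)
      then show False using assms by simp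
    qed
    then show ?thesis using that by blast
  qed
  obtain y :: "real^'n" where y: "y \<noteq> 0" "y \<bullet> v = 0"
  proof (cases "v $ i = 0 \<and> v $ j = 0")
    case True
    then show ?thesis using that[of "axis i 1"] by (simp add: inner_axis' axis_eq_0_iff)
  next
    case False
    define y where "y = axis i (v $ j) - axis j (v $ i)"
    have "y $ i = v $ j" "y $ j = - v $ i" using ij by (simp_all add: y_def axis_def)
    then have "y \<noteq> 0" using False by auto
    moreover have "y \<bullet> v = 0" by (simp add: y_def inner_diff_left inner_axis' mult.commute)
    ultimately show ?thesis using that by blast
  qed
  then show ?thesis by (intro exI[of _ "(1/norm y) *\<^sub>R y"]) auto
qed

lemma g_le_max:
  assumes "symmetric_matrix Q" "CARD('n) \<ge> 2"
  shows "g phi Q (v::real^'n) \<le> lambda_max Q"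
proof -
  obtain x where x: "norm x = 1" "x \<bullet> v = 0" using exists_orth[OF assms(2)] by blast
  have xx: "x \<bullet> x = 1" using x(1) by (simp add: power2_norm_eq_inner[symmetric])
  have "g phi Q v \<le> x \<bullet> (Q *v x)" using g_lb[OF assms(1), of phi v x] xx x(2) by simp
  also have "\<dots> \<le> lambda_max Q" using lmax_props[OF assms(1)] xx by (metis mult.right_neutral)
  finally show ?thesis .
qed

theorem corollary1:
  fixes A P Q :: "real^'n^'n" and B :: "real^'n" and bb \<gamma> :: real
    and ce :: "real \<Rightarrow> real"
  assumes "hurwitz A"
    and "pos_def P" and "pos_def Q"
    and "Q = - (transpose A ** P + P ** A)"
    and "bb > 0"
    and "0 < \<gamma>" and "\<gamma> < 1"
    and "\<And>\<alpha>. ce \<alpha> = g (\<alpha> * bb * \<gamma>) Q (P *v B) / lambda_max P"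
  shows "((\<exists>s>0. strict_mono_on {0<..<s} ce) \<longleftrightarrow> g 1 Q (P *v B) > lambda_min Q)
    \<and> (CARD('n) \<ge> 2 \<longrightarrow> (\<forall>\<alpha>>0. ce \<alpha> \<le> lambda_max Q / lambda_max P))
    \<and> (\<not> (g 1 Q (P *v B) > lambda_min Q) \<longrightarrow>
         (\<forall>\<alpha>>0. ce \<alpha> = lambda_min Q / lambda_max P))"
proof -
  define v where "v = P *v B"
  define h where "h = (\<lambda>phi. g phi Q v)"
  define L where "L = lambda_max P"
  define k where "k = bb * \<gamma>"
  have symQ: "symmetric_matrix Q" using assms(3) unfolding pos_def_def by simp
  have symP: "symmetric_matrix P" using assms(2) unfolding pos_def_def by simp
  have kpos: "k > 0" using assms(5,6) k_def by simp
  have Lpos: "L > 0"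
  proof -
    obtain x where x: "norm x = 1" "x \<bullet> (P *v x) = lambda_max P" using lmax_props[OF symP] by blast
    have "x \<noteq> 0" using x(1) by auto
    then show ?thesis using assms(2) x(2) unfolding pos_def_def L_def by auto
  qed
  have ce: "ce a = h (a * k) / L" for a using assms(8)[of a] by (simp add: h_def v_def L_def k_def mult.assoc)
  have h0: "h 0 = lambda_min Q" by (simp add: h_def g_zero)
  have hmono: "a \<le> b \<Longrightarrow> h a \<le> h b" for a b unfolding h_def by (rule g_mono[OF symQ])
  have P3: "\<not> (h 1 > h 0) \<Longrightarrow> \<forall>phi>0. h phi = h 0"
  proof (intro allI impI)
    fix phi :: real assume n: "\<not> (h 1 > h 0)" and p: "phi > 0"
    have e1: "h 1 = h 0" using n hmono[of 0 1] by simp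
    show "h phi = h 0"
    proof (cases "phi \<ge> 1")
      case True
      have "h phi = h 1" unfolding h_def
        by (rule g_flat[OF symQ, of 0]) (use e1 True in \<open>auto simp: h_def\<close>)
      then show ?thesis using e1 by simp
    next
      case False
      then show ?thesis using hmono[of 0 phi] hmono[of phi 1] e1 p by simp
    qed
  qed
  have part3: "\<not> (h 1 > h 0) \<Longrightarrow> \<forall>a>0. ce a = lambda_min Q / L"
    using P3 ce h0 kpos by simp
  have part2: "CARD('n) \<ge> 2 \<Longrightarrow> \<forall>a>0. ce a \<le> lambda_max Q / L"
  proof (intro allI impI)
    fix a :: real assume c: "CARD('n) \<ge> 2"
    have "h (a*k) \<le> lambda_max Q" unfolding h_def by (rule g_le_max[OF symQ c])
    then show "ce a \<le> lambda_max Q / L" using ce Lpos by (simp add: divide_right_mono)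
  qed
  have part1: "(\<exists>s>0. strict_mono_on {0<..<s} ce) \<longleftrightarrow> h 1 > h 0"
  proof
    assume "\<exists>s>0. strict_mono_on {0<..<s} ce"
    then obtain s where s: "s > 0" "strict_mono_on {0<..<s} ce" by blast
    show "h 1 > h 0"
    proof (rule ccontr)
      assume n: "\<not> h 1 > h 0"
      have "ce (s / 3) < ce (2 * s / 3)" using s by (intro strict_mono_onD[OF s(2)]) auto
      moreover have "ce (s / 3) = ce (2 * s / 3)" using part3[OF n] s by simp
      ultimately show False by simp
    qed
  next
    assume gt: "h 1 > h 0"
    define d where "d = h 1 - h 0"
    have dpos: "d > 0" using gt d_def by simp
    obtain w where w: "w \<ge> 0" "\<And>a. h a \<le> h 0 + a * w" using g_cont0[OF symQ, of v] unfolding h_def by blast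
    define s where "s = min 1 (d / (w+1))"
    have spos: "s > 0" using dpos w(1) by (simp add: s_def)
    have sw: "s * w < d"
    proof -
      have "s \<le> d/(w+1)" by (simp add: s_def)
      then have "s * w \<le> d/(w+1) * w" using w(1) by (rule mult_right_mono)
      also have "\<dots> < d" using dpos w(1) by (simp add: field_simps)
      finally show ?thesis .
    qed
    have hs: "h a < h b" if ab: "0 < a" "a < b" "b < s" for a b
    proof (rule ccontr)
      assume "\<not> h a < h b"
      then have eq: "h a = h b" using hmono[of a b] ab by simp
      have b1: "b \<le> 1" using ab s_def by simp
      have "h 1 = h b" unfolding h_def by (rule g_flat[OF symQ, of a]) (use eq ab b1 in \<open>auto simp: h_def\<close>)
      moreover have "h a \<le> h 0 + a * w" by (rule w(2))
      moreover have "a * w \<le> s * w" using ab w(1) by (simp add: mult_right_mono)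
      ultimately show False using sw eq d_def by simp
    qed
    show "\<exists>s>0. strict_mono_on {0<..<s} ce"
    proof (intro exI[of _ "s/k"] conjI strict_mono_onI)
      show "s/k > 0" using spos kpos by simp
      fix a b assume a: "a \<in> {0<..<s/k}" and b: "b \<in> {0<..<s/k}" and ab: "a < b"
      have "h (a*k) < h (b*k)"
        using a b ab kpos by (intro hs) (auto simp: field_simps)
      then show "ce a < ce b" using ce Lpos by (simp add: divide_strict_right_mono)
    qed
  qed
  show ?thesis using part1 part2 part3 h0 unfolding h_def v_def L_def by simp
qed

end
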